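(* Let $M \ge 2$ be an integer and let $\alpha \in (0,1]$ satisfy $2\lceil 1/\alpha\rceil \le M$ (equivalently, the feasible set below is nonempty). Consider the optimization problem $$\text{maximize } \Bigl(-\sum_{i=1}^M s_i\log s_i + \sum_{i=1}^M t_i \log t_i\Bigr)$$ over $(s_1,t_1,\ldots,s_M,t_M)\in\mathbb{R}^{2M}$ subject to $s_i,t_i\ge 0$, $s_i+t_i\le\alpha$, $s_i t_i = 0$ for all $i\in\{1,\ldots,M\}$, and $\sum_{i=1}^M s_i = \sum_{i=1}^M t_i = 1$. Then the maximum is attained and equals $$g(\alpha) = \log\Bigl(M - \Bigl\lceil \frac1\alpha\Bigr\rceil\Bigr) + \alpha\Bigl\lfloor\frac1\alpha\Bigr\rfloor\log\alpha + \Bigl(1-\alpha\Bigl\lfloor\frac1\alpha\Bigr\rfloor\Bigr)\log\Bigl(1-\alpha\Bigl\lfloor\frac1\alpha\Bigr\rfloor\Bigr).$$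
   Context: Logarithms are natural, with the convention $0\log 0 = 0$. *)

theory Defs
  imports "HOL-Analysis.Analysis"
begin

definition xlogx :: "real \<Rightarrow> real" where
  "xlogx x = (if x = 0 then 0 else x * ln x)"

definition feasible :: "nat \<Rightarrow> real \<Rightarrow> (nat \<Rightarrow> real) \<Rightarrow> (nat \<Rightarrow> real) \<Rightarrow> bool" where
  "feasible M \<alpha> s t \<longleftrightarrow>
     (\<forall>i\<in>{1..M}. s i \<ge> 0 \<and> t i \<ge> 0 \<and> s i + t i \<le> \<alpha> \<and> s i * t i = 0) \<and>
     (\<Sum>i=1..M. s i) = 1 \<and> (\<Sum>i=1..M. t i) = 1"

definition objective :: "nat \<Rightarrow> (nat \<Rightarrow> real) \<Rightarrow> (nat \<Rightarrow> real) \<Rightarrow> real" where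
  "objective M s t = - (\<Sum>i=1..M. xlogx (s i)) + (\<Sum>i=1..M. xlogx (t i))"

definition gval :: "nat \<Rightarrow> real \<Rightarrow> real" where
  "gval M \<alpha> = ln (real M - of_int \<lceil>1/\<alpha>\<rceil>)
     + \<alpha> * of_int \<lfloor>1/\<alpha>\<rfloor> * ln \<alpha>
     + xlogx (1 - \<alpha> * of_int \<lfloor>1/\<alpha>\<rfloor>)"

end

theory Submission
  imports Defs
begin

lemma gibbs: fixes a x :: real assumes "0 < a" "0 < x" shows "a - x \<le> a * (ln a - ln x)"
proof -
  have "ln (x/a) \<le> x/a - 1" using assms by (intro ln_le_minus_one) simp
  hence "ln x - ln a \<le> x/a - 1" using assms by (simp add: ln_divide_pos)
  hence "a * (ln x - ln a) \<le> a * (x/a - 1)" using assms by (intro mult_left_mono) auto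
  moreover have "a * (x/a - 1) = x - a" using assms by (simp add: field_simps)
  ultimately show ?thesis by (simp add: algebra_simps)
qed

lemma xlogx_chord:
  assumes "0 < r" "r < a" "0 \<le> x" "x \<le> a"
  shows "xlogx x \<le> ((xlogx a - xlogx r)/(a - r)) * x
          + (xlogx a - ((xlogx a - xlogx r)/(a - r)) * a) * min (x/r) 1"
proof (cases "x \<le> r")
  case True
  have m: "min (x/r) 1 = x/r" using True assms by auto
  have "((xlogx a - xlogx r)/(a - r)) * x
          + (xlogx a - ((xlogx a - xlogx r)/(a - r)) * a) * (x/r) = x * ln r"
  proof -
    define d where "d = a - r"
    have d: "a = r + d" "d > 0" using assms by (auto simp: d_def)
    show ?thesis using assms unfolding d(1) using d(2) by (simp add: xlogx_def field_simps)
  qed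
  moreover have "xlogx x \<le> x * ln r"
  proof (cases "x = 0")
    case True thus ?thesis by (simp add: xlogx_def)
  next
    case False
    hence "0 < x" using assms by auto
    hence "ln x \<le> ln r" using True assms by simp
    thus ?thesis using \<open>0 < x\<close> by (simp add: xlogx_def mult_left_mono)
  qed
  ultimately show ?thesis using m by simp
next
  case False
  hence m: "min (x/r) 1 = 1" using assms by auto
  have x0: "0 < x" using False assms by auto
  have g1: "(a - x) * (r - x) \<le> (a - x) * (r * (ln r - ln x))"
    using gibbs[of r x] assms x0 by (intro mult_left_mono) auto
  have g2: "(x - r) * (a - x) \<le> (x - r) * (a * (ln a - ln x))"
    using gibbs[of a x] assms x0 False by (intro mult_left_mono) auto
  have key: "(a - r) * (x * ln x) \<le> r * (a - x) * ln r + a * (x - r) * ln a"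
    using g1 g2 by (simp add: algebra_simps)
  have "((xlogx a - xlogx r)/(a - r)) * x
          + (xlogx a - ((xlogx a - xlogx r)/(a - r)) * a) * 1
        = (r * (a - x) * ln r + a * (x - r) * ln a) / (a - r)"
  proof -
    define d where "d = a - r"
    have d: "a = r + d" "d > 0" using assms by (auto simp: d_def)
    show ?thesis using assms unfolding d(1) using d(2) by (simp add: xlogx_def field_simps)
  qed
  moreover have "x * ln x \<le> (r * (a - x) * ln r + a * (x - r) * ln a) / (a - r)"
    using key assms by (simp add: field_simps mult.commute)
  ultimately show ?thesis using m x0 by (simp add: xlogx_def)
qed


lemma ent_pt:
  fixes x K :: real assumes "0 \<le> x" "0 < K"
  shows "- xlogx x \<le> x * ln K + (if x > 0 then 1/K else 0) - x"
proof (cases "x = 0")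
  case True thus ?thesis by (simp add: xlogx_def)
next
  case False
  hence x0: "0 < x" using assms by auto
  have "ln (1 / (K * x)) \<le> 1 / (K * x) - 1" using x0 assms by (intro ln_le_minus_one) simp
  hence "- ln K - ln x \<le> 1 / (K * x) - 1" using x0 assms by (simp add: ln_div ln_mult_pos)
  hence "x * (- ln K - ln x) \<le> x * (1 / (K * x) - 1)" using x0 by (intro mult_left_mono) auto
  moreover have "x * (1 / (K * x) - 1) = 1/K - x" using x0 assms by (simp add: field_simps)
  ultimately show ?thesis using x0 by (simp add: xlogx_def algebra_simps)
qed

lemma ent_bound:
  fixes s :: "nat \<Rightarrow> real" and K :: real
  assumes "finite A" "\<forall>i\<in>A. s i \<ge> 0" "sum s A = 1" "real (card {i\<in>A. s i > 0}) \<le> K" "0 < K"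
  shows "- (\<Sum>i\<in>A. xlogx (s i)) \<le> ln K"
proof -
  have "- (\<Sum>i\<in>A. xlogx (s i)) = (\<Sum>i\<in>A. - xlogx (s i))" by (simp add: sum_negf)
  also have "\<dots> \<le> (\<Sum>i\<in>A. s i * ln K + (if s i > 0 then 1/K else 0) - s i)"
    using assms by (intro sum_mono ent_pt) auto
  also have "\<dots> = ln K + real (card {i\<in>A. s i > 0}) / K - 1"
    using assms by (simp add: sum.distrib sum_subtractf sum_distrib_right[symmetric] sum.inter_filter[symmetric])
  also have "\<dots> \<le> ln K" using assms by (simp add: divide_le_eq_1)
  finally show ?thesis .
qed

lemma count_bound:
  fixes t :: "nat \<Rightarrow> real" and n :: nat
  assumes "finite A" "\<forall>i\<in>A. 0 \<le> t i \<and> t i \<le> a" "sum t A = 1"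
    "0 < r" "r < a" "r = 1 - real n * a"
  shows "real n + 1 \<le> (\<Sum>i\<in>A. min (t i / r) 1)"
proof -
  define H where "H = {i\<in>A. r \<le> t i}"
  define L where "L = A - H"
  have fH: "finite H" "finite L" "H \<subseteq> A" using assms by (auto simp: H_def L_def)
  have AHL: "A = H \<union> L" "H \<inter> L = {}" by (auto simp: H_def L_def)
  have sA: "(\<Sum>i\<in>A. min (t i / r) 1) = (\<Sum>i\<in>H. min (t i / r) 1) + (\<Sum>i\<in>L. min (t i / r) 1)"
    using fH AHL by (metis sum.union_disjoint)
  have sH: "(\<Sum>i\<in>H. min (t i / r) 1) = real (card H)"
    using assms by (simp add: H_def)
  have sL: "(\<Sum>i\<in>L. min (t i / r) 1) = (\<Sum>i\<in>L. t i) / r"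
  proof -
    have "(\<Sum>i\<in>L. min (t i / r) 1) = (\<Sum>i\<in>L. t i / r)"
    proof (rule sum.cong)
      fix i assume "i \<in> L"
      hence "t i < r" by (auto simp: L_def H_def)
      hence "t i / r \<le> 1" using assms by simp
      thus "min (t i / r) 1 = t i / r" by simp
    qed simp
    thus ?thesis by (simp add: sum_divide_distrib)
  qed
  have tA: "sum t A = sum t H + sum t L" using fH AHL by (metis sum.union_disjoint)
  have tH: "sum t H \<le> real (card H) * a"
    using sum_bounded_above[of H t a] assms fH by (auto simp: H_def)
  have tL: "sum t L \<ge> 0" using assms by (auto simp: L_def intro: sum_nonneg)
  show ?thesis
  proof (cases "card H \<ge> n + 1")
    case True
    hence "real n + 1 \<le> real (card H)" by linarith
    moreover have "0 \<le> (\<Sum>i\<in>L. t i) / r" using tL assms by simp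
    ultimately show ?thesis using sA sH sL by linarith
  next
    case False
    hence p: "real (card H) \<le> real n" by simp
    have "0 \<le> (real n - real (card H)) * (a - r)" using p assms by simp
    hence h: "0 \<le> real n * a - real n * r - real (card H) * a + real (card H) * r"
      by (simp add: algebra_simps)
    have e: "1 = r + real n * a" using assms by simp
    have "(real n + 1) * r = real n * r + r" by (simp add: algebra_simps)
    hence "(real n + 1) * r \<le> real (card H) * r + (1 - real (card H) * a)"
      using h e by linarith
    also have "\<dots> \<le> real (card H) * r + sum t L" using tA tH assms by linarith
    also have "\<dots> = (real (card H) + sum t L / r) * r" using assms by (simp add: field_simps)
    finally have "real n + 1 \<le> real (card H) + sum t L / r"
      using assms by (meson mult_right_le_imp_le)
    thus ?thesis using sA sH sL by linarith
  qed
qed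

lemma t_bound:
  fixes t :: "nat \<Rightarrow> real" and n :: nat
  assumes "finite A" "\<forall>i\<in>A. 0 \<le> t i \<and> t i \<le> a" "sum t A = 1" "0 < a"
    "real n * a \<le> 1" "1 < (real n + 1) * a"
  shows "(\<Sum>i\<in>A. xlogx (t i)) \<le> a * real n * ln a + xlogx (1 - a * real n)"
proof -
  define r where "r = 1 - real n * a"
  have r0: "0 \<le> r" "r < a" using assms by (auto simp: r_def algebra_simps)
  show ?thesis
  proof (cases "r = 0")
    case True
    have "(\<Sum>i\<in>A. xlogx (t i)) \<le> (\<Sum>i\<in>A. t i * ln a)"
    proof (intro sum_mono)
      fix i assume "i \<in> A"
      hence ti: "0 \<le> t i" "t i \<le> a" using assms by auto
      show "xlogx (t i) \<le> t i * ln a"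
      proof (cases "t i = 0")
        case False
        hence "0 < t i" using ti by auto
        hence "ln (t i) \<le> ln a" using ti assms by simp
        thus ?thesis using \<open>0 < t i\<close> by (simp add: xlogx_def mult_left_mono)
      qed (simp add: xlogx_def)
    qed
    also have "\<dots> = ln a" using assms by (simp add: sum_distrib_right[symmetric])
    finally show ?thesis using True by (simp add: r_def xlogx_def algebra_simps)
  next
    case False
    hence rp: "0 < r" using r0 by auto
    define c where "c = (xlogx a - xlogx r)/(a - r)"
    define K where "K = xlogx a - c * a"
    have Kneg: "K < 0"
    proof -
      have "ln r < ln a" using rp r0 by simp
      hence "r * ln r < r * ln a" using rp by simp
      hence "xlogx a - xlogx r > (a - r) * ln a" using rp r0 assms
        by (simp add: xlogx_def algebra_simps)
      hence "c > ln a" using r0 by (simp add: c_def field_simps)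
      thus ?thesis using assms by (simp add: K_def xlogx_def algebra_simps)
    qed
    have "(\<Sum>i\<in>A. xlogx (t i)) \<le> (\<Sum>i\<in>A. c * t i + K * min (t i / r) 1)"
    proof (intro sum_mono)
      fix i assume "i \<in> A"
      thus "xlogx (t i) \<le> c * t i + K * min (t i / r) 1"
        using xlogx_chord[of r a "t i"] assms rp r0 unfolding c_def K_def by auto
    qed
    also have "\<dots> = c + K * (\<Sum>i\<in>A. min (t i / r) 1)"
      using assms by (simp add: sum.distrib sum_distrib_left[symmetric])
    also have "\<dots> \<le> c + K * (real n + 1)"
      using count_bound[of A t a r n] assms rp r0 Kneg by (simp add: r_def mult_left_mono_neg)
    also have "\<dots> = a * real n * ln a + xlogx (1 - a * real n)"
    proof -
      have "c * (a - r) = xlogx a - xlogx r" using r0 by (simp add: c_def)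
      moreover have "1 - a * real n = r" by (simp add: r_def)
      moreover have "1 - (real n + 1) * a = r - a" by (simp add: r_def algebra_simps)
      ultimately have "c + K * (real n + 1) = (real n + 1) * xlogx a - (xlogx a - xlogx r)"
      proof -
        assume h1: "c * (a - r) = xlogx a - xlogx r" and h2: "1 - a * real n = r" and h3: "1 - (real n + 1) * a = r - a"
        have "c * (r + a * real n) = c" using h2 by simp
        hence "c = c * r + c * a * real n" by (simp add: algebra_simps)
        moreover have "c * a - c * r = xlogx a - xlogx r" using h1 by (simp add: algebra_simps)
        ultimately show ?thesis by (simp add: K_def algebra_simps)
      qed
      thus ?thesis using assms by (simp add: r_def xlogx_def algebra_simps)
    qed
    finally show ?thesis .
  qed
qed


theorem lemma1:
  fixes M :: nat and \<alpha> :: real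
  assumes "M \<ge> 2" and "0 < \<alpha>" and "\<alpha> \<le> 1"
    and "2 * \<lceil>1/\<alpha>\<rceil> \<le> int M"
  shows "(\<exists>s t. feasible M \<alpha> s t \<and> objective M s t = gval M \<alpha>) \<and>
         (\<forall>s t. feasible M \<alpha> s t \<longrightarrow> objective M s t \<le> gval M \<alpha>)"
proof -
  define n where "n = nat \<lfloor>1/\<alpha>\<rfloor>"
  define m where "m = nat \<lceil>1/\<alpha>\<rceil>"
  have ge1: "1 \<le> 1/\<alpha>" using assms by simp
  have fl1: "1 \<le> \<lfloor>1/\<alpha>\<rfloor>" using ge1 by (simp add: le_floor_iff)
  have ce1: "1 \<le> \<lceil>1/\<alpha>\<rceil>" using ge1 assms(2) by (simp add: le_ceiling_iff)
  have f0: "0 \<le> \<lfloor>1/\<alpha>\<rfloor>" "0 \<le> \<lceil>1/\<alpha>\<rceil>" using fl1 ce1 by linarith+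
  have nfl: "of_int \<lfloor>1/\<alpha>\<rfloor> = real n" unfolding n_def by (rule of_nat_nat[OF f0(1), symmetric])
  have mce: "of_int \<lceil>1/\<alpha>\<rceil> = real m" unfolding m_def by (rule of_nat_nat[OF f0(2), symmetric])
  have m1: "1 \<le> m" using ce1 unfolding m_def by linarith
  have mM: "2 * m \<le> M" using assms(4) f0 unfolding m_def by linarith
  have fc: "\<lfloor>1/\<alpha>\<rfloor> \<le> \<lceil>1/\<alpha>\<rceil>" "\<lceil>1/\<alpha>\<rceil> \<le> \<lfloor>1/\<alpha>\<rfloor> + 1"
    by (rule floor_le_ceiling) (simp add: ceiling_altdef)
  have nm: "n \<le> m" "m \<le> n + 1" using fc f0 unfolding n_def m_def by linarith+
  have na1: "real n * \<alpha> \<le> 1"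
  proof -
    have "real n \<le> 1/\<alpha>" using nfl[symmetric] by (metis of_int_floor_le)
    thus ?thesis using assms by (simp add: field_simps)
  qed
  have na2: "1 < (real n + 1) * \<alpha>"
  proof -
    have "1/\<alpha> < real n + 1" using nfl by (metis floor_correct of_int_1 of_int_add)
    thus ?thesis using assms by (simp add: field_simps)
  qed
  have mge: "1/\<alpha> \<le> real m" using mce by (metis le_of_int_ceiling)
  define r where "r = 1 - \<alpha> * real n"
  have r0: "0 \<le> r" "r < \<alpha>" using na1 na2 by (simp_all add: r_def algebra_simps)
  have rcase: "r = 0 \<or> m = n + 1"
  proof (cases "m = n")
    case True
    hence "\<lceil>1/\<alpha>\<rceil> = \<lfloor>1/\<alpha>\<rfloor>" using mce nfl by simp
    hence "1/\<alpha> = real n" using nfl by (metis le_of_int_ceiling of_int_floor_le order_antisym)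
    hence "r = 0" using assms by (simp add: r_def field_simps)
    thus ?thesis by simp
  qed (use nm in auto)
  define K where "K = M - m"
  have Kr: "real K = real M - real m" using mM by (simp add: K_def)
  have Km: "m \<le> K" using mM by (simp add: K_def)
  have K0: "0 < real K" using Km m1 by simp
  have gv: "gval M \<alpha> = ln (real K) + \<alpha> * real n * ln \<alpha> + xlogx r"
    by (simp add: gval_def nfl mce Kr r_def)
  have sum_if: "\<And>(P::nat\<Rightarrow>bool) (c::real) B. finite B \<Longrightarrow> (\<Sum>i\<in>B. if P i then c else 0) = c * real (card {i\<in>B. P i})"
    by (simp add: sum.inter_filter[symmetric])
  show ?thesis
  proof
    define t where "t = (\<lambda>i::nat. (if 1 \<le> i \<and> i \<le> n then \<alpha> else 0) + (if i = n + 1 then r else 0))"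
    define s where "s = (\<lambda>i::nat. if m < i then 1 / real K else 0)"
    have sK: "1 / real K \<le> \<alpha>"
    proof -
      have "1/\<alpha> \<le> real K" using mge Km by linarith
      thus ?thesis using assms K0 by (simp add: field_simps)
    qed
    have nM: "n + 1 \<le> M" using nm mM m1 by linarith
    have c1: "{i\<in>{1..M}. 1 \<le> i \<and> i \<le> n} = {1..n}" using nM by auto
    have c2: "{i\<in>{1..M}. m < i} = {m+1..M}" by auto
    have feas: "feasible M \<alpha> s t"
      unfolding feasible_def
    proof (intro conjI ballI)
      fix i assume i: "i \<in> {1..M}"
      show "s i \<ge> 0" using K0 by (simp add: s_def)
      show "t i \<ge> 0" using r0 assms by (simp add: t_def)
      show "s i + t i \<le> \<alpha>"
      proof (cases "m < i")
        case True
        hence "t i = 0" using rcase nm by (auto simp: t_def)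
        thus ?thesis using True sK by (simp add: s_def)
      next
        case False
        thus ?thesis using r0 by (auto simp: s_def t_def)
      qed
      show "s i * t i = 0"
      proof (cases "m < i")
        case True
        hence "t i = 0" using rcase nm by (auto simp: t_def)
        thus ?thesis by simp
      qed (simp add: s_def)
    next
      show "(\<Sum>i=1..M. s i) = 1"
        unfolding s_def using sum_if[of "{1..M}" "\<lambda>i. m < i" "1 / real K"] c2 K0
        by (simp add: K_def)
    next
      have "(\<Sum>i=1..M. t i) = \<alpha> * real n + r"
        unfolding t_def using sum_if[of "{1..M}" "\<lambda>i. 1 \<le> i \<and> i \<le> n" \<alpha>] c1 nM
        by (simp add: sum.distrib)
      thus "(\<Sum>i=1..M. t i) = 1" by (simp add: r_def)
    qed
    have xs: "(\<Sum>i=1..M. xlogx (s i)) = - ln (real K)"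
    proof -
      have "(\<Sum>i=1..M. xlogx (s i)) = (\<Sum>i=1..M. if m < i then xlogx (1 / real K) else 0)"
        by (rule sum.cong) (auto simp: s_def xlogx_def)
      also have "\<dots> = xlogx (1 / real K) * real K"
        using sum_if[of "{1..M}" "\<lambda>i. m < i" "xlogx (1 / real K)"] c2 by (simp add: K_def)
      also have "\<dots> = - ln (real K)" using K0 by (simp add: xlogx_def ln_div)
      finally show ?thesis .
    qed
    have xt: "(\<Sum>i=1..M. xlogx (t i)) = \<alpha> * real n * ln \<alpha> + xlogx r"
    proof -
      have "(\<Sum>i=1..M. xlogx (t i)) = (\<Sum>i=1..M. (if 1 \<le> i \<and> i \<le> n then xlogx \<alpha> else 0) + (if i = n + 1 then xlogx r else 0))"
        by (rule sum.cong) (auto simp: t_def xlogx_def)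
      also have "\<dots> = xlogx \<alpha> * real n + xlogx r"
        using sum_if[of "{1..M}" "\<lambda>i. 1 \<le> i \<and> i \<le> n" "xlogx \<alpha>"] c1 nM
        by (simp add: sum.distrib)
      also have "\<dots> = \<alpha> * real n * ln \<alpha> + xlogx r" using assms by (simp add: xlogx_def)
      finally show ?thesis .
    qed
    show "\<exists>s t. feasible M \<alpha> s t \<and> objective M s t = gval M \<alpha>"
      using feas xs xt gv by (intro exI[of _ s] exI[of _ t]) (simp add: objective_def)
  next
    show "\<forall>s t. feasible M \<alpha> s t \<longrightarrow> objective M s t \<le> gval M \<alpha>"
    proof (intro allI impI)
      fix s t assume f: "feasible M \<alpha> s t"
      define A where "A = {1..M}"
      have fs: "\<forall>i\<in>A. 0 \<le> s i" "\<forall>i\<in>A. 0 \<le> t i \<and> t i \<le> \<alpha>" "\<forall>i\<in>A. s i * t i = 0"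
        "sum s A = 1" "sum t A = 1"
        using f unfolding feasible_def A_def by force+
      define P where "P = {i\<in>A. s i > 0}"
      define Q where "Q = {i\<in>A. t i > 0}"
      have fA: "finite A" by (simp add: A_def)
      have "sum t A \<le> (\<Sum>i\<in>A. if t i > 0 then \<alpha> else 0)"
        using fs by (intro sum_mono) auto
      also have "\<dots> = \<alpha> * real (card Q)" using sum_if[OF fA] by (simp add: Q_def)
      finally have "1 \<le> \<alpha> * real (card Q)" using fs by simp
      hence "1/\<alpha> \<le> real (card Q)" using assms by (simp add: field_simps)
      hence "\<lceil>1/\<alpha>\<rceil> \<le> int (card Q)" by (simp add: ceiling_le_iff)
      hence mQ: "m \<le> card Q" unfolding m_def by linarith
      have PQ: "P \<inter> Q = {}" using fs by (auto simp: P_def Q_def)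
      have "card P + card Q = card (P \<union> Q)" using PQ fA by (simp add: P_def Q_def card_Un_disjoint)
      also have "\<dots> \<le> card A" using fA by (intro card_mono) (auto simp: P_def Q_def)
      finally have "card P \<le> K" using mQ by (simp add: A_def K_def)
      hence "real (card P) \<le> real K" by simp
      hence e1: "- (\<Sum>i\<in>A. xlogx (s i)) \<le> ln (real K)"
        using ent_bound[OF fA fs(1) fs(4)] K0 by (simp add: P_def)
      have e2: "(\<Sum>i\<in>A. xlogx (t i)) \<le> \<alpha> * real n * ln \<alpha> + xlogx (1 - \<alpha> * real n)"
        using t_bound[OF fA fs(2) fs(5) assms(2) na1 na2] .
      show "objective M s t \<le> gval M \<alpha>"
        using e1 e2 gv by (simp add: objective_def A_def r_def)
    qed
  qed
qed

end
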